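(* Let $D=\{z\in\mathbb C: |z|<R\}$ with $0<R<\infty$, and let $d\mu(z)=m(z)\,d\lambda(z)$, where $m\ge 0$ is a radially symmetric weight ($m(z)$ depends only on $|z|$) such that the monomials $\{z^n\}_{n\in\mathbb N_0}$ belong to $A^2(D,d\mu)$ and form an orthogonal basis of $A^2(D,d\mu)$. Put $c_n^2=\int_D |z|^{2n}\,d\mu(z)$. Then the canonical solution operator $S: A^2(D,d\mu)\to L^2(D,d\mu)$ to $\overline\partial$ is a Hilbert–Schmidt operator if and only if $\lim_{n\to\infty} \frac{c_{n+1}^2}{c_n^2}<\infty$ (i.e. the sequence $c_{n+1}^2/c_n^2$ converges to a finite limit).
   Context: $d\lambda$ denotes Lebesgue measure. $A^2(D,d\mu)$ is the (weighted Bergman) space of holomorphic functions $g$ on $D$ with $\int_D|g|^2\,d\mu<\infty$, a closed subspace of $L^2(D,d\mu)$. The canonical solution operator $S$ assigns to $g\in A^2(D,d\mu)$ the unique function $u=S(g)\in L^2(D,d\mu)$ with $\overline\partial u=g$ (in the distributional sense) and $u\perp A^2(D,d\mu)$ in $L^2(D,d\mu)$; equivalently $S(g)=\overline z g-P(\overline z g)$ where $P$ is the orthogonal (Bergman) projection of $L^2(D,d\mu)$ onto $A^2(D,d\mu)$. *)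

theory Defs
  imports "HOL-Analysis.Analysis"
begin

definition wmeasure :: "(complex \<Rightarrow> real) \<Rightarrow> complex set \<Rightarrow> complex measure" where
  "wmeasure m D = density lborel (\<lambda>z. ennreal (m z * indicator D z))"

text \<open>Square-integrable functions L^2(D, mu) (represented by functions; a.e. classes implicit).\<close>
definition L2 :: "complex measure \<Rightarrow> (complex \<Rightarrow> complex) set" where
  "L2 M = {f. f \<in> borel_measurable M \<and> integrable M (\<lambda>z. (cmod (f z))\<^sup>2)}"

definition L2_inner :: "complex measure \<Rightarrow> (complex \<Rightarrow> complex) \<Rightarrow> (complex \<Rightarrow> complex) \<Rightarrow> complex" where
  "L2_inner M f g = integral\<^sup>L M (\<lambda>z. f z * cnj (g z))"

definition L2_norm :: "complex measure \<Rightarrow> (complex \<Rightarrow> complex) \<Rightarrow> real" where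
  "L2_norm M f = sqrt (integral\<^sup>L M (\<lambda>z. (cmod (f z))\<^sup>2))"

definition A2 :: "complex measure \<Rightarrow> complex set \<Rightarrow> (complex \<Rightarrow> complex) set" where
  "A2 M D = {g. g holomorphic_on D \<and> g \<in> L2 M}"

text \<open>u is the canonical solution of dbar u = g: u = conj(z) g - P(conj(z) g), i.e.
  u is in L^2, conj(z) g - u lies in A^2, and u is orthogonal to A^2.\<close>
definition canonical_solution ::
  "complex measure \<Rightarrow> complex set \<Rightarrow> (complex \<Rightarrow> complex) \<Rightarrow> (complex \<Rightarrow> complex) \<Rightarrow> bool" where
  "canonical_solution M D g u \<longleftrightarrow>
     u \<in> L2 M \<and>
     (\<exists>h \<in> A2 M D. \<forall>z \<in> D. u z = cnj z * g z - h z) \<and>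
     (\<forall>f \<in> A2 M D. L2_inner M u f = 0)"

definition canon_sol_op ::
  "complex measure \<Rightarrow> complex set \<Rightarrow> (complex \<Rightarrow> complex) \<Rightarrow> (complex \<Rightarrow> complex)" where
  "canon_sol_op M D g = (SOME u. canonical_solution M D g u)"

definition A2_orthonormal_basis ::
  "complex measure \<Rightarrow> complex set \<Rightarrow> (complex \<Rightarrow> complex) set \<Rightarrow> bool" where
  "A2_orthonormal_basis M D B \<longleftrightarrow>
     B \<subseteq> A2 M D \<and>
     (\<forall>e \<in> B. L2_inner M e e = 1) \<and>
     (\<forall>e \<in> B. \<forall>e' \<in> B. e \<noteq> e' \<longrightarrow> L2_inner M e e' = 0) \<and>
     (\<forall>g \<in> A2 M D. (\<forall>e \<in> B. L2_inner M g e = 0) \<longrightarrow> (AE z in M. g z = 0))"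

definition hilbert_schmidt_A2 ::
  "complex measure \<Rightarrow> complex set \<Rightarrow> ((complex \<Rightarrow> complex) \<Rightarrow> (complex \<Rightarrow> complex)) \<Rightarrow> bool" where
  "hilbert_schmidt_A2 M D T \<longleftrightarrow>
     (\<exists>B. A2_orthonormal_basis M D B \<and> (\<lambda>e. (L2_norm M (T e))\<^sup>2) summable_on B)"

definition monomials_orthogonal_basis :: "complex measure \<Rightarrow> complex set \<Rightarrow> bool" where
  "monomials_orthogonal_basis M D \<longleftrightarrow>
     (\<forall>n::nat. (\<lambda>z. z ^ n) \<in> A2 M D) \<and>
     (\<forall>n::nat. L2_inner M (\<lambda>z. z ^ n) (\<lambda>z. z ^ n) \<noteq> 0) \<and>
     (\<forall>n k::nat. n \<noteq> k \<longrightarrow> L2_inner M (\<lambda>z. z ^ n) (\<lambda>z. z ^ k) = 0) \<and>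
     (\<forall>g \<in> A2 M D. (\<forall>n::nat. L2_inner M g (\<lambda>z. z ^ n) = 0) \<longrightarrow> (AE z in M. g z = 0))"

end

theory Submission
  imports Defs "HOL-Complex_Analysis.Complex_Analysis"
begin

definition c2v :: "complex \<Rightarrow> real^2" where
  "c2v z = (\<chi> i. if i = 1 then Re z else Im z)"
definition v2c :: "real^2 \<Rightarrow> complex" where
  "v2c v = Complex (v$1) (v$2)"

lemma v2c_c2v[simp]: "v2c (c2v z) = z"
  by (simp add: v2c_def c2v_def complex_eq_iff)

lemma c2v_v2c[simp]: "c2v (v2c v) = v"
proof -
  have "c2v (v2c v) $ i = v $ i" for i
    using exhaust_2[of i] by (auto simp: c2v_def v2c_def)
  then show ?thesis by (simp add: vec_eq_iff)
qed
lemma Basis_2: "(Basis :: (real^2) set) = {axis 1 1, axis 2 1}"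
proof -
  have "axis i (1::real) \<in> {axis 1 1, axis 2 1}" for i :: 2
    using exhaust_2[of i] by auto
  then show ?thesis by (auto simp: Basis_vec_def)
qed

lemma linear_c2v: "linear c2v"
  by (auto simp: linear_iff c2v_def vec_eq_iff)
lemma linear_v2c: "linear v2c"
  by (auto simp: linear_iff v2c_def complex_eq_iff)

lemma c2v_meas[measurable]: "c2v \<in> borel_measurable borel"
  using linear_c2v by (intro borel_measurable_continuous_onI linear_continuous_on) (simp add: linear_conv_bounded_linear)
lemma v2c_meas[measurable]: "v2c \<in> borel_measurable borel"
  using linear_v2c by (intro borel_measurable_continuous_onI linear_continuous_on) (simp add: linear_conv_bounded_linear)

lemma norm_c2v: "norm (c2v z) = norm z"
proof -
  have "norm (c2v z) = sqrt (\<Sum>i\<in>UNIV. (c2v z $ i)\<^sup>2)"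
    by (simp add: norm_vec_def L2_set_def)
  also have "\<dots> = sqrt ((Re z)\<^sup>2 + (Im z)\<^sup>2)"
    by (simp add: UNIV_2 c2v_def)
  finally show ?thesis by (simp add: norm_complex_def)
qed

lemma distr_c2v: "distr lborel borel c2v = (lborel :: (real^2) measure)"
proof (rule lborel_eqI[symmetric])
  fix l u :: "real^2"
  assume le: "\<And>b. b \<in> Basis \<Longrightarrow> l \<bullet> b \<le> u \<bullet> b"
  have pre: "c2v -` box l u = box (v2c l) (v2c u)"
    by (auto simp: mem_box Basis_2 Basis_complex_def inner_axis c2v_def v2c_def)
  have "emeasure (distr lborel borel c2v) (box l u) = emeasure lborel (box (v2c l) (v2c u))"
    by (simp add: emeasure_distr pre)
  also have "\<dots> = (\<Prod>b\<in>Basis. (v2c u - v2c l) \<bullet> b)"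
    using le[of "axis 1 1"] le[of "axis 2 1"]
    by (intro emeasure_lborel_box) (auto simp: Basis_2 inner_axis Basis_complex_def v2c_def)
  also have "\<dots> = (\<Prod>b\<in>Basis. (u - l) \<bullet> b)"
    by (simp add: Basis_2 inner_axis Basis_complex_def v2c_def axis_eq_axis)
  finally show "emeasure (distr lborel borel c2v) (box l u) = (\<Prod>b\<in>Basis. (u - l) \<bullet> b)" .
qed simp

lemma distr_orth:
  fixes T :: "real^2 \<Rightarrow> real^2"
  assumes T: "orthogonal_transformation T"
  shows "distr lborel borel T = lborel"
proof (rule lborel_eqI[symmetric])
  have lin: "linear T" using T orthogonal_transformation_linear by blast
  have contT: "continuous_on UNIV T"
    using lin by (intro linear_continuous_on) (simp add: linear_conv_bounded_linear)
  then have measT[measurable]: "T \<in> borel_measurable borel"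
    by (intro borel_measurable_continuous_onI)
  fix l u :: "real^2"
  assume le: "\<And>b. b \<in> Basis \<Longrightarrow> l \<bullet> b \<le> u \<bullet> b"
  have bijT: "bij T" using T orthogonal_transformation_bij by blast
  have pre: "T -` box l u = inv T ` box l u"
    using bijT by (simp add: bij_vimage_eq_inv_image)
  have op: "open (T -` box l u)"
    using contT open_box by (rule_tac open_vimage) auto
  have "emeasure (distr lborel borel T) (box l u) = emeasure lborel (T -` box l u)"
    by (simp add: emeasure_distr)
  also have "\<dots> = emeasure lebesgue (T -` box l u)"
    using op by (simp add: emeasure_completion borel_open)
  also have "\<dots> = ennreal (measure lebesgue (T -` box l u))"
  proof (rule emeasure_eq_ennreal_measure)
    have "inv T ` box l u \<in> lmeasurable"
      using orthogonal_transformation_inv[OF T] by (rule measurable_orthogonal_image) simp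
    then show "emeasure lebesgue (T -` box l u) \<noteq> top" using top.not_eq_extremum by (auto simp add: pre fmeasurable_def simp del: emeasure_completion)
  qed
  also have "\<dots> = ennreal (measure lebesgue (box l u))"
    unfolding pre using orthogonal_transformation_inv[OF T]
    by (simp add: measure_orthogonal_image)
  also have "\<dots> = (\<Prod>b\<in>Basis. (u - l) \<bullet> b)"
    using le by (simp add: measure_lborel_box prod_nonneg)
  finally show "emeasure (distr lborel borel T) (box l u) = (\<Prod>b\<in>Basis. (u - l) \<bullet> b)" .
qed simp

lemma norm_v2c: "norm (v2c v) = norm v"
  by (metis c2v_v2c norm_c2v)

lemma distr_v2c: "distr lborel borel v2c = (lborel :: complex measure)"
proof -
  have "distr lborel borel v2c = distr (distr lborel borel c2v) borel v2c" by (simp add: distr_c2v)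
  also have "\<dots> = distr lborel borel (v2c \<circ> c2v)" by (simp add: distr_distr)
  also have "\<dots> = distr lborel borel (\<lambda>x. x)" by (simp add: comp_def)
  also have "\<dots> = lborel" by (simp add: distr_id2)
  finally show ?thesis .
qed

lemma rot_lborel:
  fixes c :: complex
  assumes c: "norm c = 1"
  shows "distr lborel borel (\<lambda>z. c * z) = (lborel :: complex measure)"
proof -
  define T where "T = (\<lambda>v. c2v (c * v2c v))"
  have lin2: "linear v2c" "linear c2v" by (rule linear_v2c, rule linear_c2v)
  have "orthogonal_transformation T"
    unfolding orthogonal_transformation_isometry
  proof safe
    show "T 0 = 0" using lin2 by (simp add: T_def linear_0)
    fix x y
    have "T x - T y = c2v (c * (v2c x - v2c y))"
      using lin2 by (simp add: T_def linear_diff ring_distribs)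
    also have "\<dots> = c2v (c * v2c (x - y))"
      using lin2 by (simp add: linear_diff)
    finally show "dist (T x) (T y) = dist x y"
      by (simp add: dist_norm norm_c2v norm_mult c norm_v2c)
  qed
  then have dT: "distr lborel borel T = lborel" by (rule distr_orth)
  have mT[measurable]: "T \<in> borel_measurable borel" unfolding T_def by measurable
  have "distr lborel borel (\<lambda>z. c * z) = distr (distr lborel borel v2c) borel (\<lambda>z. c * z)"
    by (simp add: distr_v2c)
  also have "\<dots> = distr lborel borel ((\<lambda>z. c * z) \<circ> v2c)" by (simp add: distr_distr)
  also have "(\<lambda>z. c * z) \<circ> v2c = v2c \<circ> T" by (simp add: T_def fun_eq_iff)
  also have "distr lborel borel (v2c \<circ> T) = distr (distr lborel borel T) borel v2c"
    by (simp add: distr_distr)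
  also have "\<dots> = lborel" by (simp add: dT distr_v2c)
  finally show ?thesis .
qed



lemma cnj_meas[measurable (raw)]: "f \<in> borel_measurable M \<Longrightarrow> (\<lambda>x. cnj (f x)) \<in> borel_measurable M"
  by (rule borel_measurable_continuous_on[OF continuous_on_cnj[OF continuous_on_id]])

locale wsetting =
  fixes R :: real and m :: "complex \<Rightarrow> real"
  assumes R: "0 < R" and mmeas[measurable]: "m \<in> borel_measurable borel"
    and mnn: "\<And>z. m z \<ge> 0"
    and mrad: "\<And>z w. cmod z = cmod w \<Longrightarrow> m z = m w"
    and mono: "monomials_orthogonal_basis (wmeasure m (ball 0 R)) (ball 0 R)"
begin

abbreviation "D \<equiv> ball (0::complex) R"
abbreviation "M \<equiv> wmeasure m D"

lemma D_borel[measurable]: "ball (0::complex) R \<in> sets borel"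
  by simp

lemma sets_M[simp, measurable_cong]: "sets M = sets borel"
  by (simp add: wmeasure_def)

lemma space_M[simp]: "space M = UNIV"
  by (simp add: wmeasure_def)

lemma AE_D: "AE z in M. z \<in> D"
  unfolding wmeasure_def
  by (subst AE_density) (auto split: split_indicator)

lemma AE_D': "AE z in M. cmod z < R"
  using AE_D by eventually_elim simp

lemma mono_A2: "(\<lambda>z. z ^ n) \<in> A2 M D"
  using mono by (simp add: monomials_orthogonal_basis_def)

lemma finite_M: "finite_measure M"
proof (rule finite_measureI)
  have "integrable M (\<lambda>z. (cmod (z ^ 0))\<^sup>2)"
    using mono_A2[of 0] by (simp add: A2_def L2_def)
  then have "integrable M (\<lambda>z. 1::real)" by simp
  then have "(\<integral>\<^sup>+ z. ennreal 1 \<partial>M) < \<infinity>"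
    using integrableD(2)[of M "\<lambda>z. 1::real"] by (simp add: less_top)
  then show "emeasure M (space M) \<noteq> \<infinity>"
    by (simp add: nn_integral_const)
qed

lemma bnd_int:
  fixes f :: "complex \<Rightarrow> 'a::{banach,second_countable_topology}"
  assumes "f \<in> borel_measurable borel" "\<And>z. z \<in> D \<Longrightarrow> norm (f z) \<le> B"
  shows "integrable M f"
proof (rule finite_measure.integrable_const_bound[OF finite_M])
  show "AE x in M. norm (f x) \<le> B" using AE_D by eventually_elim (rule assms(2))
  show "f \<in> borel_measurable M" using assms(1) by simp
qed

lemma L2_meas: "f \<in> L2 M \<Longrightarrow> f \<in> borel_measurable borel"
  by (simp add: L2_def measurable_cong_sets[OF sets_M refl])

lemma L2_sq_int: "f \<in> L2 M \<Longrightarrow> integrable M (\<lambda>z. (cmod (f z))\<^sup>2)"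
  by (simp add: L2_def)

lemma le_1_sq: "(t::real) \<ge> 0 \<Longrightarrow> t \<le> 1 + t\<^sup>2"
proof (cases "t \<le> 1")
  case True
  then show ?thesis using zero_le_power2[of t] by linarith
next
  case False
  then have "t * 1 \<le> t * t" by (intro mult_left_mono) auto
  then show ?thesis by (simp add: power2_eq_square)
qed

lemma L2_int: assumes "f \<in> L2 M" shows "integrable M f"
proof (rule Bochner_Integration.integrable_bound)
  show "integrable M (\<lambda>z. 1 + (cmod (f z))\<^sup>2)"
    using L2_sq_int[OF assms] finite_measure.integrable_const[OF finite_M]
    by (intro Bochner_Integration.integrable_add) auto
  show "f \<in> borel_measurable M" using L2_meas[OF assms] by simp
  show "AE x in M. norm (f x) \<le> norm (1 + (cmod (f x))\<^sup>2)"
  proof (rule AE_I2)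
    fix x
    have "cmod (f x) \<le> 1 + (cmod (f x))\<^sup>2"
      by (rule le_1_sq) simp
    then show "norm (f x) \<le> norm (1 + (cmod (f x))\<^sup>2)" by simp
  qed
qed

lemma L2_prod_int: assumes "f \<in> L2 M" "g \<in> L2 M"
  shows "integrable M (\<lambda>z. f z * cnj (g z))"
proof (rule Bochner_Integration.integrable_bound)
  show "integrable M (\<lambda>z. (cmod (f z))\<^sup>2 + (cmod (g z))\<^sup>2)"
    using L2_sq_int[OF assms(1)] L2_sq_int[OF assms(2)] by (intro Bochner_Integration.integrable_add)
  have [measurable]: "f \<in> borel_measurable borel" "g \<in> borel_measurable borel"
    using L2_meas[OF assms(1)] L2_meas[OF assms(2)] by auto
  show "(\<lambda>z. f z * cnj (g z)) \<in> borel_measurable M"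
    by measurable
  show "AE x in M. norm (f x * cnj (g x)) \<le> norm ((cmod (f x))\<^sup>2 + (cmod (g x))\<^sup>2)"
  proof (rule AE_I2)
    fix x
    have "cmod (f x) * cmod (g x) \<le> (cmod (f x))\<^sup>2 + (cmod (g x))\<^sup>2"
      using sum_squares_bound[of "cmod (f x)" "cmod (g x)"]
        mult_nonneg_nonneg[OF norm_ge_zero[of "f x"] norm_ge_zero[of "g x"]] by linarith
    then show "norm (f x * cnj (g x)) \<le> norm ((cmod (f x))\<^sup>2 + (cmod (g x))\<^sup>2)"
      by (simp add: norm_mult)
  qed
qed

lemma int_density:
  fixes F :: "complex \<Rightarrow> complex"
  assumes "F \<in> borel_measurable borel"
  shows "integral\<^sup>L M F = integral\<^sup>L lborel (\<lambda>z. (m z * indicator D z) *\<^sub>R F z)"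
  unfolding wmeasure_def
proof (rule integral_density)
  show "F \<in> borel_measurable lborel" using assms by simp
  show "(\<lambda>z. m z * indicator D z) \<in> borel_measurable lborel" by measurable
  show "AE x in lborel. 0 \<le> m x * indicator D x" by (simp add: mnn)
qed

lemma rot_int:
  fixes F :: "complex \<Rightarrow> complex"
  assumes c: "norm c = 1" and F[measurable]: "F \<in> borel_measurable borel"
  shows "integral\<^sup>L M (\<lambda>z. F (c * z)) = integral\<^sup>L M F"
proof -
  define H where "H = (\<lambda>z. (m z * indicator D z) *\<^sub>R F z)"
  have Hm[measurable]: "H \<in> borel_measurable borel" unfolding H_def by measurable
  have eq: "(m z * indicator D z) *\<^sub>R F (c * z) = H (c * z)" for z
  proof -
    have "cmod (c * z) = cmod z" by (simp add: norm_mult c)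
    then show ?thesis unfolding H_def using mrad[of "c*z" z] by (simp add: indicator_def)
  qed
  have "integral\<^sup>L M (\<lambda>z. F (c * z)) = integral\<^sup>L lborel (\<lambda>z. H (c * z))"
    by (subst int_density) (simp_all add: eq)
  also have "\<dots> = integral\<^sup>L (distr lborel borel (\<lambda>z. c * z)) H"
    by (subst integral_distr) simp_all
  also have "\<dots> = integral\<^sup>L M F"
    by (simp add: rot_lborel[OF c] int_density H_def)
  finally show ?thesis .
qed

end


definition tc :: "(complex \<Rightarrow> complex) \<Rightarrow> nat \<Rightarrow> complex" where
  "tc f j = (deriv ^^ j) f 0 / fact j"

lemma ball_meas[measurable]: "ball (0::complex) r \<in> sets borel" by simp

lemma cnj_pow_meas[measurable]: "(\<lambda>x::complex. cnj (x ^ j)) \<in> borel_measurable borel"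
  by (intro borel_measurable_continuous_onI continuous_intros)

context wsetting begin

definition rr :: "nat \<Rightarrow> real" where
  "rr N = R - R / 2 * inverse (real (Suc N))"

lemma rr_pos: "0 < rr N" and rr_less: "rr N < R"
proof -
  have "inverse (real (Suc N)) \<le> 1" by (simp add: inverse_le_1_iff)
  moreover have "0 < inverse (real (Suc N))" by auto
  ultimately
  show "0 < rr N" "rr N < R" using R unfolding rr_def
    by (auto simp: mult_le_cancel_left1)
qed

lemma rr_lim: "rr \<longlonglongrightarrow> R"
proof -
  have "(\<lambda>N. R - R / 2 * inverse (real (Suc N))) \<longlonglongrightarrow> R - R / 2 * 0"
    by (intro tendsto_intros LIMSEQ_inverse_real_of_nat)
  then show ?thesis by (simp add: rr_def[abs_def])
qed

lemma A2_hol: "f \<in> A2 M D \<Longrightarrow> f holomorphic_on D" by (simp add: A2_def)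
lemma A2_L2: "f \<in> A2 M D \<Longrightarrow> f \<in> L2 M" by (simp add: A2_def)

lemma taylor_sums:
  assumes "f holomorphic_on D" "z \<in> D"
  shows "(\<lambda>j. tc f j * z ^ j) sums f z"
  using holomorphic_power_series[OF assms] by (simp add: tc_def)

lemma taylor_abs:
  assumes "f holomorphic_on D" "0 \<le> r" "r < R"
  shows "summable (\<lambda>j. norm (tc f j) * r ^ j)"
proof -
  define x where "x = complex_of_real ((r + R) / 2)"
  have "x \<in> D" unfolding x_def mem_ball dist_0_norm norm_of_real using assms by simp
  then have "summable (\<lambda>j. tc f j * x ^ j)"
    using taylor_sums[OF assms(1)] sums_summable by blast
  moreover have "norm (complex_of_real r) < norm x" unfolding x_def norm_of_real using assms by simp
  ultimately have "summable (\<lambda>j. norm (tc f j * (complex_of_real r) ^ j))"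
    by (rule powser_insidea)
  then show ?thesis using assms by (simp add: norm_mult norm_power)
qed

lemma lim_ind:
  fixes F :: "complex \<Rightarrow> complex"
  assumes F: "F \<in> borel_measurable borel" and G: "integrable M G"
    and bnd: "\<And>z. z \<in> D \<Longrightarrow> norm (F z) \<le> G z"
  shows "(\<lambda>N. integral\<^sup>L M (\<lambda>z. indicator (ball 0 (rr N)) z * F z)) \<longlonglongrightarrow> integral\<^sup>L M F"
proof (rule integral_dominated_convergence[where w = G])
  note [measurable] = F
  show "F \<in> borel_measurable M" by simp
  show "(\<lambda>z. indicator (ball 0 (rr N)) z * F z) \<in> borel_measurable M" for N by measurable
  show "integrable M G" by (rule G)
  show "AE x in M. (\<lambda>N. indicator (ball 0 (rr N)) x * F x) \<longlonglongrightarrow> F x"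
    using AE_D
  proof eventually_elim
    fix x assume "x \<in> D"
    then have "cmod x < R" by simp
    then have "eventually (\<lambda>N. cmod x < rr N) sequentially"
      by (rule order_tendstoD(1)[OF rr_lim])
    then have "eventually (\<lambda>N. indicator (ball 0 (rr N)) x * F x = F x) sequentially"
      by eventually_elim (simp add: indicator_def)
    then show "(\<lambda>N. indicator (ball 0 (rr N)) x * F x) \<longlonglongrightarrow> F x"
      by (rule tendsto_eventually)
  qed
  show "AE x in M. norm (indicator (ball 0 (rr N)) x * F x) \<le> G x" for N
    using AE_D
  proof eventually_elim
    fix x assume "x \<in> D"
    then show "norm (indicator (ball 0 (rr N)) x * F x) \<le> G x"
      using bnd[of x] order_trans[OF norm_ge_zero bnd[of x]] by (auto simp: indicator_def)
  qed
qed

lemma sub_orth: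
  fixes w :: "complex \<Rightarrow> complex"
  assumes w: "w \<in> borel_measurable borel"
    and hw: "\<And>c z. norm c = 1 \<Longrightarrow> w (c * z) = c ^ p * cnj c ^ q * w z"
    and d: "int j \<noteq> int p - int q"
  shows "integral\<^sup>L M (\<lambda>z. indicator (ball 0 r) z * w z * cnj (z ^ j)) = 0"
proof -
  note [measurable] = w
  define F where "F = (\<lambda>z. indicator (ball 0 r) z * w z * cnj (z ^ j))"
  have Fm[measurable]: "F \<in> borel_measurable borel" unfolding F_def by measurable
  define dd where "dd = int p - int q - int j"
  have dd0: "dd \<noteq> 0" using d by (simp add: dd_def)
  define c where "c = cis (pi / real_of_int dd)"
  have c1: "norm c = 1" by (simp add: c_def)
  have "c ^ p * cnj c ^ (q + j) = cis (real p * (pi / real_of_int dd)) * cis (real (q + j) * (- (pi / real_of_int dd)))"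
    unfolding c_def cis_cnj Complex.DeMoivre by simp
  also have "\<dots> = cis ((real p - real q - real j) * (pi / real_of_int dd))"
    by (simp add: cis_mult algebra_simps)
  also have "(real p - real q - real j) = real_of_int dd" by (simp add: dd_def)
  also have "real_of_int dd * (pi / real_of_int dd) = pi" using dd0 by simp
  finally have cval: "c ^ p * cnj c ^ (q + j) = -1" by simp
  have Frot: "F (c * z) = (c ^ p * cnj c ^ (q + j)) * F z" for z
  proof -
    have "cmod (c * z) = cmod z" by (simp add: norm_mult c1)
    then have "indicator (ball 0 r) (c * z) = (indicator (ball 0 r) z :: complex)"
      by (simp add: indicator_def)
    then show ?thesis unfolding F_def using hw[OF c1, of z]
      by (simp add: power_mult_distrib power_add)
  qed
  have "integral\<^sup>L M F = integral\<^sup>L M (\<lambda>z. F (c * z))" by (simp add: rot_int[OF c1])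
  also have "\<dots> = - integral\<^sup>L M F" by (simp add: Frot cval)
  finally show ?thesis unfolding F_def by simp
qed


lemma pow_le_R: "z \<in> D \<Longrightarrow> cmod z ^ j \<le> R ^ j"
  by (intro power_mono) auto

lemma int_ind_pow:
  fixes w :: "complex \<Rightarrow> complex"
  assumes w: "w \<in> borel_measurable borel" and wb: "\<And>z. z \<in> D \<Longrightarrow> norm (w z) \<le> B"
  shows "integrable M (\<lambda>z. indicator (ball 0 r) z * w z * cnj (z ^ j))"
proof (rule bnd_int[where B = "B * R ^ j"])
  note [measurable] = w
  show "(\<lambda>z. indicator (ball 0 r) z * w z * cnj (z ^ j)) \<in> borel_measurable borel" by measurable
  fix z assume z: "z \<in> D"
  have "norm (indicator (ball 0 r) z * w z * cnj (z ^ j)) \<le> 1 * B * R ^ j"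
    unfolding norm_mult complex_mod_cnj norm_power
    by (intro mult_mono pow_le_R z wb) (auto simp: indicator_def intro: order_trans[OF norm_ge_zero wb[OF z]])
  then show "norm (indicator (ball 0 r) z * w z * cnj (z ^ j)) \<le> B * R ^ j" by simp
qed

lemma sub_sums:
  fixes w f :: "complex \<Rightarrow> complex"
  assumes f: "f \<in> A2 M D" and w: "w \<in> borel_measurable borel"
    and wb: "\<And>z. z \<in> D \<Longrightarrow> norm (w z) \<le> B"
    and r: "0 < r" "r < R"
  shows "(\<lambda>j. cnj (tc f j) * integral\<^sup>L M (\<lambda>z. indicator (ball 0 r) z * w z * cnj (z ^ j)))
           sums integral\<^sup>L M (\<lambda>z. indicator (ball 0 r) z * w z * cnj (f z))"
proof -
  note [measurable] = w
  have fm[measurable]: "f \<in> borel_measurable borel" using L2_meas A2_L2 f by blast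
  have hol: "f holomorphic_on D" using A2_hol f by blast
  define K where "K = (\<Sum>j. norm (tc f j) * r ^ j)"
  have sK: "summable (\<lambda>j. norm (tc f j) * r ^ j)" using taylor_abs[OF hol] r by simp
  have B0: "0 \<le> B" using wb[of 0] R by (auto intro: order_trans[OF norm_ge_zero])
  define T where "T j = integral\<^sup>L M (\<lambda>z. indicator (ball 0 r) z * w z * cnj (z ^ j))" for j
  define s where "s N z = indicator (ball 0 r) z * w z * cnj (\<Sum>j<N. tc f j * z ^ j)" for N z
  have s_eq: "s N = (\<lambda>z. \<Sum>j<N. cnj (tc f j) * (indicator (ball 0 r) z * w z * cnj (z ^ j)))" for N
    by (simp add: s_def cnj_sum sum_distrib_left mult_ac fun_eq_iff)
  define g where "g j z = cnj (tc f j) * (indicator (ball 0 r) z * w z * cnj (z ^ j))" for j z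
  have int_s: "integral\<^sup>L M (s N) = (\<Sum>j<N. cnj (tc f j) * T j)" for N
  proof -
    have "integral\<^sup>L M (\<lambda>z. \<Sum>j<N. g j z) = (\<Sum>j<N. integral\<^sup>L M (g j))"
      unfolding g_def by (rule Bochner_Integration.integral_sum) (intro integrable_mult_right int_ind_pow[OF w wb])
    then show ?thesis by (simp add: g_def[abs_def] s_eq T_def integral_mult_right_zero)
  qed
  have psum: "norm (\<Sum>j<N. tc f j * x ^ j) \<le> K" if "x \<in> ball 0 r" for N x
  proof -
    have "norm (\<Sum>j<N. tc f j * x ^ j) \<le> (\<Sum>j<N. norm (tc f j * x ^ j))" by (rule norm_sum)
    also have "\<dots> \<le> (\<Sum>j<N. norm (tc f j) * r ^ j)"
      unfolding norm_mult norm_power using that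
      by (intro sum_mono mult_left_mono power_mono) auto
    also have "\<dots> \<le> K" unfolding K_def using r by (intro sum_le_suminf[OF sK]) auto
    finally show ?thesis .
  qed
  have "(\<lambda>N. integral\<^sup>L M (s N)) \<longlonglongrightarrow> integral\<^sup>L M (\<lambda>z. indicator (ball 0 r) z * w z * cnj (f z))"
  proof (rule integral_dominated_convergence[where w = "\<lambda>z. B * K"])
    show "(\<lambda>z. indicator (ball 0 r) z * w z * cnj (f z)) \<in> borel_measurable M" by measurable
    show "s N \<in> borel_measurable M" for N unfolding s_def by measurable
    show "integrable M (\<lambda>z. B * K)" by (rule finite_measure.integrable_const[OF finite_M])
    show "AE x in M. (\<lambda>N. s N x) \<longlonglongrightarrow> indicator (ball 0 r) x * w x * cnj (f x)"
    proof (rule AE_I2)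
      fix x
      show "(\<lambda>N. s N x) \<longlonglongrightarrow> indicator (ball 0 r) x * w x * cnj (f x)"
      proof (cases "x \<in> ball 0 r")
        case True
        then have "x \<in> D" using r by auto
        then have "(\<lambda>N. \<Sum>j<N. tc f j * x ^ j) \<longlonglongrightarrow> f x"
          using taylor_sums[OF hol] by (simp add: sums_def)
        then show ?thesis unfolding s_def by (intro tendsto_intros)
      next
        case False
        then show ?thesis by (simp add: s_def)
      qed
    qed
    show "AE x in M. norm (s N x) \<le> B * K" for N
      using AE_D
    proof eventually_elim
      fix x assume x: "x \<in> D"
      show "norm (s N x) \<le> B * K"
      proof (cases "x \<in> ball 0 r")
        case True
        have "norm (s N x) = norm (w x) * norm (\<Sum>j<N. tc f j * x ^ j)"
          using True unfolding s_def norm_mult complex_mod_cnj by simp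
        also have "\<dots> \<le> B * K"
          using psum[OF True] wb[OF x] B0 by (intro mult_mono) auto
        finally show ?thesis .
      next
        case False
        have "0 \<le> K" unfolding K_def using sK r by (intro suminf_nonneg) auto
        then show ?thesis using False B0 by (simp add: s_def)
      qed
    qed
  qed
  then show ?thesis unfolding sums_def int_s T_def .
qed


lemma G:
  fixes w f :: "complex \<Rightarrow> complex"
  assumes f: "f \<in> A2 M D" and w: "w \<in> borel_measurable borel"
    and wb: "\<And>z. z \<in> D \<Longrightarrow> norm (w z) \<le> B"
    and hw: "\<And>c z. norm c = 1 \<Longrightarrow> w (c * z) = c ^ p * cnj c ^ q * w z"
  shows "integral\<^sup>L M (\<lambda>z. w z * cnj (f z)) =
         (if q \<le> p then cnj (tc f (p - q)) * integral\<^sup>L M (\<lambda>z. w z * cnj (z ^ (p - q))) else 0)"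
proof -
  note [measurable] = w
  have fm[measurable]: "f \<in> borel_measurable borel" using L2_meas A2_L2 f by blast
  have B0: "0 \<le> B" using wb[of 0] R by (auto intro: order_trans[OF norm_ge_zero])
  define I where "I N = integral\<^sup>L M (\<lambda>z. indicator (ball 0 (rr N)) z * (w z * cnj (f z)))" for N
  define T where "T N k = integral\<^sup>L M (\<lambda>z. indicator (ball 0 (rr N)) z * (w z * cnj (z ^ k)))" for N k
  have IT: "I N = (if q \<le> p then cnj (tc f (p - q)) * T N (p - q) else 0)" for N
  proof -
    have S: "(\<lambda>j. cnj (tc f j) * integral\<^sup>L M (\<lambda>z. indicator (ball 0 (rr N)) z * w z * cnj (z ^ j)))
           sums I N"
      unfolding I_def mult.assoc[symmetric] using rr_pos rr_less by (intro sub_sums[OF f w wb])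
    have Z: "integral\<^sup>L M (\<lambda>z. indicator (ball 0 (rr N)) z * w z * cnj (z ^ j)) = 0"
      if "int j \<noteq> int p - int q" for j
      using sub_orth[OF w hw that] .
    show ?thesis
    proof (cases "q \<le> p")
      case True
      have eqS: "(\<lambda>j. cnj (tc f j) * integral\<^sup>L M (\<lambda>z. indicator (ball 0 (rr N)) z * w z * cnj (z ^ j))) =
            (\<lambda>j. if j = p - q then cnj (tc f j) * integral\<^sup>L M (\<lambda>z. indicator (ball 0 (rr N)) z * w z * cnj (z ^ j)) else 0)"
      proof
        fix j show "cnj (tc f j) * integral\<^sup>L M (\<lambda>z. indicator (ball 0 (rr N)) z * w z * cnj (z ^ j)) =
            (if j = p - q then cnj (tc f j) * integral\<^sup>L M (\<lambda>z. indicator (ball 0 (rr N)) z * w z * cnj (z ^ j)) else 0)"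
          using Z[of j] True by (cases "j = p - q") auto
      qed
      have "(\<lambda>j. if j = p - q then cnj (tc f j) * integral\<^sup>L M (\<lambda>z. indicator (ball 0 (rr N)) z * w z * cnj (z ^ j)) else 0) sums I N"
        using S unfolding eqS .
      note sums_unique2[OF this sums_single[of "p - q"]]
      then have "I N = cnj (tc f (p - q)) * integral\<^sup>L M (\<lambda>z. indicator (ball 0 (rr N)) z * w z * cnj (z ^ (p - q)))"
        by simp
      then show ?thesis using True by (simp add: T_def mult.assoc)
    next
      case False
      have eqS: "(\<lambda>j. cnj (tc f j) * integral\<^sup>L M (\<lambda>z. indicator (ball 0 (rr N)) z * w z * cnj (z ^ j))) = (\<lambda>j. 0)"
      proof
        fix j show "cnj (tc f j) * integral\<^sup>L M (\<lambda>z. indicator (ball 0 (rr N)) z * w z * cnj (z ^ j)) = 0"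
          using Z[of j] False by simp
      qed
      have "(\<lambda>j. 0) sums I N" using S unfolding eqS .
      then have "I N = 0" using sums_unique2[OF _ sums_zero] by blast
      then show ?thesis using False by simp
    qed
  qed
  have limI: "I \<longlonglongrightarrow> integral\<^sup>L M (\<lambda>z. w z * cnj (f z))"
    unfolding I_def[abs_def]
  proof (rule lim_ind[where G = "\<lambda>z. B * norm (f z)"])
    show "(\<lambda>z. w z * cnj (f z)) \<in> borel_measurable borel" by measurable
    show "integrable M (\<lambda>z. B * norm (f z))"
      using L2_int[OF A2_L2[OF f]] by (intro integrable_mult_right integrable_norm)
    fix z assume z: "z \<in> D"
    show "norm (w z * cnj (f z)) \<le> B * norm (f z)"
      unfolding norm_mult complex_mod_cnj using wb[OF z] by (intro mult_right_mono) auto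
  qed
  have limT: "(\<lambda>N. T N k) \<longlonglongrightarrow> integral\<^sup>L M (\<lambda>z. w z * cnj (z ^ k))" for k
    unfolding T_def
  proof (rule lim_ind[where G = "\<lambda>z. B * R ^ k"])
    show "(\<lambda>z. w z * cnj (z ^ k)) \<in> borel_measurable borel" by measurable
    show "integrable M (\<lambda>z. B * R ^ k)" by (rule finite_measure.integrable_const[OF finite_M])
    fix z assume z: "z \<in> D"
    show "norm (w z * cnj (z ^ k)) \<le> B * R ^ k"
      unfolding norm_mult complex_mod_cnj norm_power using wb[OF z] pow_le_R[OF z] B0
      by (intro mult_mono) auto
  qed
  show ?thesis
  proof (cases "q \<le> p")
    case True
    have "I \<longlonglongrightarrow> cnj (tc f (p - q)) * integral\<^sup>L M (\<lambda>z. w z * cnj (z ^ (p - q)))"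
      unfolding IT using True by (simp del: complex_cnj_power) (intro tendsto_mult_left limT)
    with limI show ?thesis using True LIMSEQ_unique by auto
  next
    case False
    have "I \<longlonglongrightarrow> 0" unfolding IT using False by simp
    with limI show ?thesis using False LIMSEQ_unique by auto
  qed
qed

end


lemma zz_pow: "z ^ k * cnj z ^ k = complex_of_real (cmod z ^ (2 * k))"
proof -
  have "z ^ k * cnj z ^ k = (z * cnj z) ^ k" by (simp add: power_mult_distrib)
  also have "z * cnj z = complex_of_real (cmod z ^ 2)" by (metis complex_norm_square of_real_power)
  finally show ?thesis by (simp add: power_mult)
qed

lemma zz_pow': "z ^ k * cnj (z ^ k) = complex_of_real (cmod z ^ (2 * k))"
  using zz_pow by simp

lemma poly_expand: "(t::real) ^ (2 * k) * (t\<^sup>2 - l)\<^sup>2 =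
   t ^ (2 * Suc (Suc k)) - 2 * l * t ^ (2 * Suc k) + l\<^sup>2 * t ^ (2 * k)"
proof -
  have a: "t ^ (2 * Suc (Suc k)) = t ^ (2 * k) * t\<^sup>2 * t\<^sup>2" by (simp add: power_add power_mult_distrib mult_2 power2_eq_square mult_ac)
  have b: "t ^ (2 * Suc k) = t ^ (2 * k) * t\<^sup>2" by (simp add: power_add power2_eq_square mult_ac)
  show ?thesis unfolding a b by (simp add: power2_eq_square algebra_simps)
qed

context wsetting begin

definition s :: "nat \<Rightarrow> real" where
  "s n = integral\<^sup>L M (\<lambda>z. cmod z ^ (2 * n))"

lemma pow_int: "integrable M (\<lambda>z. cmod z ^ k)"
  by (rule bnd_int[where B = "R ^ k"]) (auto intro!: power_mono)

lemma pow_int': "integrable M (\<lambda>z. c * cmod z ^ k)"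
  using pow_int by (rule integrable_mult_right)

lemma inner_mono: "L2_inner M (\<lambda>z. z ^ n) (\<lambda>z. z ^ n) = complex_of_real (s n)"
  unfolding L2_inner_def s_def zz_pow' by (rule integral_complex_of_real)

lemma s_pos: "0 < s n"
proof -
  have "s n \<ge> 0" unfolding s_def by (rule Bochner_Integration.integral_nonneg) auto
  moreover have "s n \<noteq> 0" using mono inner_mono[of n] by (auto simp: monomials_orthogonal_basis_def)
  ultimately show ?thesis by simp
qed

definition cn :: "nat \<Rightarrow> real" where "cn n = sqrt (s n)"

lemma cn_pos: "0 < cn n" using s_pos by (simp add: cn_def)
lemma cn_sq: "cn n * cn n = s n" using s_pos[of n] by (simp add: cn_def abs_of_pos)

definition e :: "nat \<Rightarrow> complex \<Rightarrow> complex" where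
  "e n = (\<lambda>z. z ^ n / complex_of_real (cn n))"

lemma e_meas[measurable]: "e n \<in> borel_measurable borel"
  unfolding e_def by measurable

lemma L2_bnd:
  assumes "f \<in> borel_measurable borel" "\<And>z. z \<in> D \<Longrightarrow> norm (f z) \<le> B"
  shows "f \<in> L2 M"
  unfolding L2_def
proof safe
  show "f \<in> borel_measurable M" using assms(1) by simp
  show "integrable M (\<lambda>z. (cmod (f z))\<^sup>2)"
  proof (rule bnd_int[where B = "B\<^sup>2"])
    show "(\<lambda>z. (cmod (f z))\<^sup>2) \<in> borel_measurable borel" using assms(1) by measurable
    fix z assume "z \<in> D"
    then show "norm ((cmod (f z))\<^sup>2) \<le> B\<^sup>2" using assms(2)[of z] by (simp add: power_mono)
  qed
qed

lemma e_A2: "e n \<in> A2 M D"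
  unfolding A2_def
proof safe
  show "e n holomorphic_on D" unfolding e_def using cn_pos[of n] by (intro holomorphic_intros) simp
  show "e n \<in> L2 M"
  proof (rule L2_bnd[where B = "R ^ n / cn n"])
    fix z assume "z \<in> D"
    have "\<bar>cn n\<bar> = cn n" using cn_pos[of n] by simp
    moreover have "cmod z ^ n / cn n \<le> R ^ n / cn n"
      using cn_pos[of n] \<open>z \<in> D\<close> by (intro divide_right_mono power_mono) auto
    ultimately show "norm (e n z) \<le> R ^ n / cn n" unfolding e_def norm_divide norm_power norm_of_real
      by simp
  qed simp
qed

lemma inner_e: "L2_inner M (e n) (e k) = L2_inner M (\<lambda>z. z ^ n) (\<lambda>z. z ^ k) / complex_of_real (cn n * cn k)"
  unfolding L2_inner_def e_def by (simp add: integral_divide_zero)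

lemma inner_ee: "L2_inner M (e n) (e n) = 1"
  unfolding inner_e inner_mono cn_sq using s_pos[of n] by simp

lemma inner_ge: "L2_inner M g (e n) = L2_inner M g (\<lambda>z. z ^ n) / complex_of_real (cn n)"
  unfolding L2_inner_def e_def by (simp add: integral_divide_zero)

lemma e_inj: "inj e"
proof (rule injI)
  fix n k assume eq: "e n = e k"
  show "n = k"
  proof (rule ccontr)
    assume "n \<noteq> k"
    then have "L2_inner M (\<lambda>z. z ^ n) (\<lambda>z. z ^ k) = 0"
      using mono by (simp add: monomials_orthogonal_basis_def)
    then have "L2_inner M (e n) (e k) = 0" by (simp add: inner_e)
    then show False using inner_ee[of n] eq by simp
  qed
qed

lemma onb: "A2_orthonormal_basis M D (range e)"
  unfolding A2_orthonormal_basis_def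
proof (intro conjI ballI impI)
  show "range e \<subseteq> A2 M D" using e_A2 by auto
  fix x assume "x \<in> range e"
  then show "L2_inner M x x = 1" using inner_ee by auto
next
  fix x y assume "x \<in> range e" "y \<in> range e" "x \<noteq> y"
  then obtain n k where "x = e n" "y = e k" "n \<noteq> k" by auto
  moreover have "L2_inner M (\<lambda>z. z ^ n) (\<lambda>z. z ^ k) = 0"
    using mono \<open>n \<noteq> k\<close> by (simp add: monomials_orthogonal_basis_def)
  ultimately show "L2_inner M x y = 0" by (simp add: inner_e)
next
  fix g assume g: "g \<in> A2 M D" and orth: "\<forall>x\<in>range e. L2_inner M g x = 0"
  have "L2_inner M g (\<lambda>z. z ^ n) = 0" for n
    using orth[rule_format, of "e n"] cn_pos[of n] by (simp add: inner_ge)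
  then show "AE z in M. g z = 0" using mono g by (simp add: monomials_orthogonal_basis_def)
qed


definition lam :: "nat \<Rightarrow> real" where
  "lam n = (if n = 0 then 0 else s n / s (n - 1))"

definition hh :: "nat \<Rightarrow> complex \<Rightarrow> complex" where
  "hh n = (\<lambda>z. complex_of_real (lam n / cn n) * z ^ (n - 1))"

definition u :: "nat \<Rightarrow> complex \<Rightarrow> complex" where
  "u n = (\<lambda>z. indicator D z * (cnj z * e n z - hh n z))"

lemma hh_meas[measurable]: "hh n \<in> borel_measurable borel"
  unfolding hh_def by measurable

lemma u_meas[measurable]: "u n \<in> borel_measurable borel"
  unfolding u_def by measurable

lemma hh_bnd: "z \<in> D \<Longrightarrow> norm (hh n z) \<le> \<bar>lam n / cn n\<bar> * R ^ (n - 1)"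
  unfolding hh_def norm_mult norm_power norm_of_real
  by (intro mult_left_mono power_mono) auto

lemma e_bnd: "z \<in> D \<Longrightarrow> norm (e n z) \<le> R ^ n / cn n"
proof -
  assume z: "z \<in> D"
  have "\<bar>cn n\<bar> = cn n" using cn_pos[of n] by simp
  moreover have "cmod z ^ n / cn n \<le> R ^ n / cn n"
    using cn_pos[of n] z by (intro divide_right_mono power_mono) auto
  ultimately show "norm (e n z) \<le> R ^ n / cn n" unfolding e_def norm_divide norm_power norm_of_real
    by simp
qed

lemma u_bnd: "z \<in> D \<Longrightarrow> norm (u n z) \<le> R * (R ^ n / cn n) + \<bar>lam n / cn n\<bar> * R ^ (n - 1)"
proof -
  assume z: "z \<in> D"
  have "norm (u n z) = norm (cnj z * e n z - hh n z)" using z by (simp add: u_def)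
  also have "\<dots> \<le> norm (cnj z * e n z) + norm (hh n z)" by (rule norm_triangle_ineq4)
  also have "\<dots> \<le> R * (R ^ n / cn n) + \<bar>lam n / cn n\<bar> * R ^ (n - 1)"
    unfolding norm_mult complex_mod_cnj using z e_bnd[OF z] hh_bnd[OF z] R
    by (intro add_mono mult_mono) auto
  finally show ?thesis .
qed

lemma hh_A2: "hh n \<in> A2 M D"
  unfolding A2_def
proof safe
  show "hh n holomorphic_on D" unfolding hh_def by (intro holomorphic_intros)
  show "hh n \<in> L2 M" by (rule L2_bnd[OF hh_meas hh_bnd])
qed

lemma u_L2: "u n \<in> L2 M" by (rule L2_bnd[OF u_meas u_bnd])

lemma u_rot:
  assumes c: "norm c = 1"
  shows "u n (c * z) = c ^ n * cnj c ^ 1 * u n z"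
proof -
  have cc: "c * cnj c = 1" using c by (metis complex_norm_square mult.commute of_real_1 power_one)
  have ind: "indicator D (c * z) = (indicator D z :: complex)"
    using c by (simp add: indicator_def norm_mult)
  have e1: "cnj (c * z) * e n (c * z) = c ^ n * cnj c * (cnj z * e n z)"
    by (simp add: e_def power_mult_distrib)
  have h1: "hh n (c * z) = c ^ n * cnj c * hh n z"
  proof (cases n)
    case 0 then show ?thesis by (simp add: hh_def lam_def)
  next
    case (Suc k)
    have "c ^ n * cnj c = c ^ k * (c * cnj c)" using Suc by simp
    then have ck: "c ^ n * cnj c = c ^ k" using cc by simp
    have "hh n (c * z) = c ^ k * hh n z" using Suc by (simp add: hh_def power_mult_distrib)
    then show ?thesis using ck by simp
  qed
  show ?thesis unfolding u_def ind e1 h1 by (simp add: algebra_simps)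
qed

lemma u_zn:
  assumes n: "n = Suc k"
  shows "integral\<^sup>L M (\<lambda>z. u n z * cnj (z ^ k)) = 0"
proof -
  have pt: "u n z * cnj (z ^ k) =
      complex_of_real ((cmod z ^ (2 * Suc k) - lam n * cmod z ^ (2 * k)) / cn n)" if z: "z \<in> D" for z
  proof -
    have "u n z * cnj (z ^ k) = (z ^ Suc k * cnj z ^ Suc k) / complex_of_real (cn n)
          - complex_of_real (lam n / cn n) * (z ^ k * cnj z ^ k)"
      using z n by (simp add: u_def e_def hh_def algebra_simps)
    also have "\<dots> = complex_of_real ((cmod z ^ (2 * Suc k) - lam n * cmod z ^ (2 * k)) / cn n)"
      unfolding zz_pow by (simp add: diff_divide_distrib)
    finally show ?thesis .
  qed
  have "integral\<^sup>L M (\<lambda>z. u n z * cnj (z ^ k)) =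
      integral\<^sup>L M (\<lambda>z. complex_of_real ((cmod z ^ (2 * Suc k) - lam n * cmod z ^ (2 * k)) / cn n))"
    by (rule integral_cong_AE) (use AE_D pt in \<open>auto elim!: eventually_mono\<close>)
  also have "\<dots> = complex_of_real ((s (Suc k) - lam n * s k) / cn n)"
    unfolding integral_complex_of_real s_def
    by (simp only: integral_divide_zero Bochner_Integration.integral_diff[OF pow_int pow_int'] integral_mult_right_zero)
  also have "s (Suc k) - lam n * s k = 0" using n s_pos[of k] by (simp add: lam_def)
  finally show ?thesis by simp
qed

lemma u_orth:
  assumes f: "f \<in> A2 M D"
  shows "L2_inner M (u n) f = 0"
proof -
  have "L2_inner M (u n) f = (if 1 \<le> n then cnj (tc f (n - 1)) * integral\<^sup>L M (\<lambda>z. u n z * cnj (z ^ (n - 1))) else 0)"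
    unfolding L2_inner_def by (rule G[OF f u_meas u_bnd u_rot])
  also have "\<dots> = 0"
  proof (cases n)
    case (Suc k) then show ?thesis using u_zn[OF Suc] by simp
  qed simp
  finally show ?thesis .
qed

lemma u_cs: "canonical_solution M D (e n) (u n)"
  unfolding canonical_solution_def
proof (intro conjI ballI)
  show "u n \<in> L2 M" by (rule u_L2)
  show "\<exists>h\<in>A2 M D. \<forall>z\<in>D. u n z = cnj z * e n z - h z"
    using hh_A2 by (intro bexI[of _ "hh n"]) (auto simp: u_def)
  fix f assume "f \<in> A2 M D"
  then show "L2_inner M (u n) f = 0" by (rule u_orth)
qed


definition nrm :: "nat \<Rightarrow> real" where
  "nrm n = (if n = 0 then s 1 / s 0 else s (Suc n) / s n - s n / s (n - 1))"

lemma u_norm_int: "integral\<^sup>L M (\<lambda>z. (cmod (u n z))\<^sup>2) = nrm n"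
proof (cases n)
  case 0
  have pt: "(cmod (u n z))\<^sup>2 = cmod z ^ (2 * 1) / s 0" if z: "z \<in> D" for z
  proof -
    have "\<bar>cn 0\<bar> = cn 0" using cn_pos[of 0] by simp
    then have "cmod (u n z) = cmod z / cn 0"
      using z 0 by (simp add: u_def e_def hh_def lam_def norm_divide)
    then show ?thesis by (simp add: power_divide power2_eq_square cn_sq)
  qed
  have "integral\<^sup>L M (\<lambda>z. (cmod (u n z))\<^sup>2) = integral\<^sup>L M (\<lambda>z. cmod z ^ (2 * 1) / s 0)"
    by (rule integral_cong_AE) (use AE_D pt in \<open>auto elim!: eventually_mono\<close>)
  also have "\<dots> = s 1 / s 0" unfolding s_def by (simp only: integral_divide_zero)
  finally show ?thesis using 0 by (simp add: nrm_def)
next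
  case (Suc k)
  have pt: "(cmod (u n z))\<^sup>2 = (cmod z ^ (2 * Suc (Suc k)) - 2 * lam n * cmod z ^ (2 * Suc k)
       + (lam n)\<^sup>2 * cmod z ^ (2 * k)) / s n" if z: "z \<in> D" for z
  proof -
    have zc1: "z * cnj z = complex_of_real (cmod z ^ 2)" using zz_pow[of z 1] by simp
    have zc: "cnj z * z ^ Suc k = z ^ k * complex_of_real (cmod z ^ 2)"
      unfolding zc1[symmetric] by (simp add: algebra_simps)
    have "u n z = cnj z * z ^ Suc k / complex_of_real (cn n) - complex_of_real (lam n / cn n) * z ^ k"
      using z Suc by (simp add: u_def e_def hh_def)
    also have "\<dots> = z ^ k * complex_of_real (cmod z ^ 2) / complex_of_real (cn n) - complex_of_real (lam n / cn n) * z ^ k"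
      by (simp only: zc)
    also have "\<dots> = z ^ k * complex_of_real ((cmod z ^ 2 - lam n) / cn n)"
      by (simp add: diff_divide_distrib algebra_simps)
    finally have "u n z = z ^ k * complex_of_real ((cmod z ^ 2 - lam n) / cn n)" .
    then have "cmod (u n z) = cmod z ^ k * \<bar>(cmod z ^ 2 - lam n) / cn n\<bar>"
      by (simp only: norm_mult norm_power norm_of_real)
    then have "(cmod (u n z))\<^sup>2 = (cmod z ^ k)\<^sup>2 * ((cmod z ^ 2 - lam n) / cn n)\<^sup>2"
      by (simp only: power_mult_distrib power2_abs)
    also have "\<dots> = cmod z ^ (2 * k) * (cmod z ^ 2 - lam n)\<^sup>2 / s n"
      by (simp add: power_divide power_mult[symmetric] cn_sq[symmetric] power2_eq_square[of "cn n"] mult.commute)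
    finally have "(cmod (u n z))\<^sup>2 = cmod z ^ (2 * k) * (cmod z ^ 2 - lam n)\<^sup>2 / s n" .
    then show ?thesis by (simp add: poly_expand)
  qed
  have "integral\<^sup>L M (\<lambda>z. (cmod (u n z))\<^sup>2) = integral\<^sup>L M (\<lambda>z. (cmod z ^ (2 * Suc (Suc k)) - 2 * lam n * cmod z ^ (2 * Suc k)
       + (lam n)\<^sup>2 * cmod z ^ (2 * k)) / s n)"
    by (rule integral_cong_AE) (use AE_D pt in \<open>auto elim!: eventually_mono\<close>)
  also have "\<dots> = (s (Suc (Suc k)) - 2 * lam n * s (Suc k) + (lam n)\<^sup>2 * s k) / s n"
    unfolding s_def
    by (simp only: integral_divide_zero Bochner_Integration.integral_add[OF Bochner_Integration.integrable_diff[OF pow_int pow_int'] pow_int']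
        Bochner_Integration.integral_diff[OF pow_int pow_int'] integral_mult_right_zero)
  also have "\<dots> = nrm n"
    using s_pos[of k] s_pos[of "Suc k"] Suc by (simp add: lam_def nrm_def field_simps power2_eq_square)
  finally show ?thesis .
qed

lemma u_norm: "(L2_norm M (u n))\<^sup>2 = nrm n"
proof -
  have "0 \<le> integral\<^sup>L M (\<lambda>z. (cmod (u n z))\<^sup>2)" by (rule Bochner_Integration.integral_nonneg) simp
  then show ?thesis unfolding L2_norm_def by (simp add: u_norm_int)
qed


lemma cs_unique:
  assumes cv: "canonical_solution M D g v" and cw: "canonical_solution M D g w"
  shows "L2_norm M v = L2_norm M w"
proof -
  obtain h1 where h1: "h1 \<in> A2 M D" "\<forall>z\<in>D. v z = cnj z * g z - h1 z"
    using cv unfolding canonical_solution_def by blast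
  obtain h2 where h2: "h2 \<in> A2 M D" "\<forall>z\<in>D. w z = cnj z * g z - h2 z"
    using cw unfolding canonical_solution_def by blast
  have vL: "v \<in> L2 M" and ov: "\<And>f. f \<in> A2 M D \<Longrightarrow> L2_inner M v f = 0"
    using cv unfolding canonical_solution_def by auto
  have wL: "w \<in> L2 M" and ow: "\<And>f. f \<in> A2 M D \<Longrightarrow> L2_inner M w f = 0"
    using cw unfolding canonical_solution_def by auto
  have h1L: "h1 \<in> L2 M" and h2L: "h2 \<in> L2 M" using h1 h2 A2_L2 by auto
  note [measurable] = L2_meas[OF vL] L2_meas[OF wL] L2_meas[OF h1L] L2_meas[OF h2L]
  have i1: "integrable M (\<lambda>z. v z * cnj (h2 z))" "integrable M (\<lambda>z. v z * cnj (h1 z))"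
       "integrable M (\<lambda>z. w z * cnj (h2 z))" "integrable M (\<lambda>z. w z * cnj (h1 z))"
    using L2_prod_int vL wL h1L h2L by auto
  define P where "P z = (v z * cnj (h2 z) - v z * cnj (h1 z)) - (w z * cnj (h2 z) - w z * cnj (h1 z))" for z
  have Pint: "integrable M P" unfolding P_def using i1 by auto
  have "integral\<^sup>L M P = (L2_inner M v h2 - L2_inner M v h1) - (L2_inner M w h2 - L2_inner M w h1)"
    unfolding P_def L2_inner_def using i1 by (simp add: Bochner_Integration.integral_diff)
  also have "\<dots> = 0" using ov ow h1 h2 by simp
  finally have P0: "integral\<^sup>L M P = 0" .
  have AEP: "AE z in M. P z = complex_of_real ((cmod (v z - w z))\<^sup>2)"
    using AE_D
  proof eventually_elim
    fix z assume z: "z \<in> D"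
    then have hv: "h2 z - h1 z = v z - w z" using h1 h2 by auto
    have "P z = (v z - w z) * cnj (h2 z - h1 z)"
      unfolding P_def by (simp add: algebra_simps)
    then have "P z = (v z - w z) * cnj (v z - w z)" by (simp only: hv)
    then show "P z = complex_of_real ((cmod (v z - w z))\<^sup>2)"
      by (simp only: complex_norm_square)
  qed
  have "integrable M (\<lambda>z. complex_of_real ((cmod (v z - w z))\<^sup>2))"
    using Pint integrable_cong_AE[of P M "\<lambda>z. complex_of_real ((cmod (v z - w z))\<^sup>2)"] AEP
    unfolding P_def by simp
  then have "integrable M (\<lambda>z. norm (complex_of_real ((cmod (v z - w z))\<^sup>2)))"
    by (rule integrable_norm)
  then have intd: "integrable M (\<lambda>z. (cmod (v z - w z))\<^sup>2)" by (simp add: norm_power)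
  have "complex_of_real (integral\<^sup>L M (\<lambda>z. (cmod (v z - w z))\<^sup>2)) = integral\<^sup>L M P"
    unfolding integral_complex_of_real[symmetric]
  proof (rule integral_cong_AE)
    show "P \<in> borel_measurable M" using Pint by (rule borel_measurable_integrable)
    show "(\<lambda>z. complex_of_real ((cmod (v z - w z))\<^sup>2)) \<in> borel_measurable M" by measurable
    show "AE z in M. complex_of_real ((cmod (v z - w z))\<^sup>2) = P z"
      using AEP by (auto elim: eventually_mono)
  qed
  then have "integral\<^sup>L M (\<lambda>z. (cmod (v z - w z))\<^sup>2) = 0" using P0 by simp
  then have "AE z in M. (cmod (v z - w z))\<^sup>2 = 0"
    using integral_nonneg_eq_0_iff_AE[OF intd] by simp
  then have "AE z in M. (cmod (v z))\<^sup>2 = (cmod (w z))\<^sup>2" by eventually_elim simp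
  then have "integral\<^sup>L M (\<lambda>z. (cmod (v z))\<^sup>2) = integral\<^sup>L M (\<lambda>z. (cmod (w z))\<^sup>2)"
    by (intro integral_cong_AE) auto
  then show ?thesis by (simp add: L2_norm_def)
qed

lemma canon_norm: "(L2_norm M (canon_sol_op M D (e n)))\<^sup>2 = nrm n"
proof -
  have "canonical_solution M D (e n) (canon_sol_op M D (e n))"
    unfolding canon_sol_op_def by (rule someI[of _ "u n"]) (rule u_cs)
  then have "L2_norm M (canon_sol_op M D (e n)) = L2_norm M (u n)"
    using u_cs by (rule cs_unique)
  then show ?thesis by (simp add: u_norm)
qed

lemma nrm_nonneg: "0 \<le> nrm n"
  using canon_norm[of n] by (metis zero_le_power2)

definition q :: "nat \<Rightarrow> real" where "q N = s (Suc N) / s N"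

lemma psums: "(\<Sum>n<Suc N. nrm n) = q N"
  by (induction N) (auto simp: nrm_def q_def)

lemma q_inc: "incseq q"
proof (rule incseq_SucI)
  fix N
  have "q (Suc N) - q N = nrm (Suc N)" by (simp add: nrm_def q_def)
  then show "q N \<le> q (Suc N)" using nrm_nonneg[of "Suc N"] by simp
qed

lemma q_bnd: "q N \<le> R\<^sup>2"
proof -
  have "s (Suc N) \<le> integral\<^sup>L M (\<lambda>z. R\<^sup>2 * cmod z ^ (2 * N))"
    unfolding s_def
  proof (rule integral_mono_AE[OF pow_int pow_int'])
    show "AE z in M. cmod z ^ (2 * Suc N) \<le> R\<^sup>2 * cmod z ^ (2 * N)"
      using AE_D
    proof eventually_elim
      fix z assume "z \<in> D"
      then have le: "cmod z ^ 2 \<le> R ^ 2" by (intro power_mono) auto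
      have e1: "cmod z ^ (2 * Suc N) = cmod z ^ 2 * cmod z ^ (2 * N)"
        by (simp only: mult_Suc_right power_add)
      show "cmod z ^ (2 * Suc N) \<le> R\<^sup>2 * cmod z ^ (2 * N)"
        unfolding e1 by (rule mult_right_mono) (use le in simp_all)
    qed
  qed
  also have "\<dots> = R\<^sup>2 * s N" unfolding s_def by (rule integral_mult_right_zero)
  finally show ?thesis using s_pos[of N] by (simp add: q_def pos_divide_le_eq)
qed

lemma q_conv: "\<exists>L. q \<longlonglongrightarrow> L"
  using incseq_convergent[OF q_inc, of "R\<^sup>2"] q_bnd by blast

lemma nrm_summable: "summable nrm"
proof -
  obtain L where L: "q \<longlonglongrightarrow> L" using q_conv by blast
  have "(\<lambda>N. \<Sum>n<Suc N. nrm n) \<longlonglongrightarrow> L" unfolding psums using L .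
  then have "(\<lambda>N. \<Sum>n<N. nrm n) \<longlonglongrightarrow> L" by (rule LIMSEQ_imp_Suc)
  then show ?thesis unfolding sums_def[symmetric] by (rule sums_summable)
qed

lemma HS: "hilbert_schmidt_A2 M D (canon_sol_op M D)"
  unfolding hilbert_schmidt_A2_def
proof (intro exI conjI)
  show "A2_orthonormal_basis M D (range e)" by (rule onb)
  have "(\<lambda>x. (L2_norm M (canon_sol_op M D x))\<^sup>2) \<circ> e = nrm"
    by (simp add: fun_eq_iff canon_norm)
  moreover have "nrm summable_on UNIV"
    by (rule summable_nonneg_imp_summable_on[OF nrm_summable nrm_nonneg])
  ultimately have "((\<lambda>x. (L2_norm M (canon_sol_op M D x))\<^sup>2) \<circ> e) summable_on UNIV"
    by simp
  then show "(\<lambda>x. (L2_norm M (canon_sol_op M D x))\<^sup>2) summable_on range e"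
    unfolding summable_on_reindex[OF e_inj] .
qed

lemma ratio_conv: "\<exists>L::real. (\<lambda>n. integral\<^sup>L M (\<lambda>z. cmod z ^ (2 * Suc n)) / integral\<^sup>L M (\<lambda>z. cmod z ^ (2 * n))) \<longlonglongrightarrow> L"
  using q_conv by (simp add: q_def[abs_def] s_def[abs_def])

end

theorem theorem2p1:
  fixes R :: real and m :: "complex \<Rightarrow> real"
  assumes "0 < R"
    and "m \<in> borel_measurable borel"
    and "\<And>z. m z \<ge> 0"
    and "\<And>z w. cmod z = cmod w \<Longrightarrow> m z = m w"
    and "monomials_orthogonal_basis (wmeasure m (ball 0 R)) (ball 0 R)"
  shows "hilbert_schmidt_A2 (wmeasure m (ball 0 R)) (ball 0 R)
           (canon_sol_op (wmeasure m (ball 0 R)) (ball 0 R))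
         \<longleftrightarrow>
         (\<exists>L::real. (\<lambda>n. integral\<^sup>L (wmeasure m (ball 0 R)) (\<lambda>z. cmod z ^ (2 * Suc n))
                       / integral\<^sup>L (wmeasure m (ball 0 R)) (\<lambda>z. cmod z ^ (2 * n)))
                   \<longlonglongrightarrow> L)"
proof -
  interpret wsetting R m using assms by unfold_locales
  show ?thesis using HS ratio_conv by blast
qed


end
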